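(* (a) For every $n$-variable symmetric Boolean function $f$ it holds that $NN(f)\le n+1$. (b) For the $n$-variable parity function, $BNN(x_1\oplus x_2\oplus\cdots\oplus x_n)=2^n$.
   Context: For a Boolean function $f:\{0,1\}^n\to\{0,1\}$, points $a$ with $f(a)=1$ are positive and those with $f(a)=0$ negative. A nearest neighbor representation of $f$ is a pair of disjoint sets $(P,N)$ of points of $\mathbb R^n$ (positive and negative prototypes) such that for every $a\in\{0,1\}^n$: if $a$ is positive, there is $b\in P$ with $d(a,b)<d(a,c)$ for all $c\in N$; if $a$ is negative, there is $b\in N$ with $d(a,b)<d(a,c)$ for all $c\in P$. Here $d$ is the Euclidean distance. The size of the representation is $|P\cup N|$. $NN(f)$ is the minimum size of a nearest neighbor representation of $f$; $BNN(f)$ is the minimum size of such a representation with $P\cup N\subseteq\{0,1\}^n$ (Boolean prototypes). A Boolean function is symmetric if its value depends only on the weight (number of 1 components) of its input. *)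

theory Defs
  imports "HOL-Analysis.Analysis"
begin

text \<open>Points of R^n are modelled as real^'n (n = CARD('n)). A Boolean function
  {0,1}^n -> {0,1} is a predicate on real^'n; only its values on the cube matter
  (True = positive, False = negative).\<close>

definition bool_cube :: "(real^'n) set" where
  "bool_cube = {x. \<forall>i. x $ i = 0 \<or> x $ i = 1}"

definition weight :: "real^'n \<Rightarrow> real" where
  "weight x = (\<Sum>i\<in>UNIV. x $ i)"

definition symmetric_bf :: "(real^'n \<Rightarrow> bool) \<Rightarrow> bool" where
  "symmetric_bf f \<longleftrightarrow>
     (\<forall>a\<in>bool_cube. \<forall>b\<in>bool_cube. weight a = weight b \<longrightarrow> f a = f b)"

definition parity :: "real^'n \<Rightarrow> bool" where
  "parity x \<longleftrightarrow> odd (card {i. x $ i = 1})"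

definition nn_rep :: "(real^'n \<Rightarrow> bool) \<Rightarrow> (real^'n) set \<Rightarrow> (real^'n) set \<Rightarrow> bool" where
  "nn_rep f P N \<longleftrightarrow> finite P \<and> finite N \<and> P \<inter> N = {} \<and>
     (\<forall>a\<in>bool_cube.
        (f a \<longrightarrow> (\<exists>b\<in>P. \<forall>c\<in>N. dist a b < dist a c)) \<and>
        (\<not> f a \<longrightarrow> (\<exists>b\<in>N. \<forall>c\<in>P. dist a b < dist a c)))"

definition NN :: "(real^'n \<Rightarrow> bool) \<Rightarrow> nat" where
  "NN f = (LEAST k. \<exists>P N. nn_rep f P N \<and> card (P \<union> N) = k)"

definition BNN :: "(real^'n \<Rightarrow> bool) \<Rightarrow> nat" where
  "BNN f = (LEAST k. \<exists>P N. nn_rep f P N \<and> P \<union> N \<subseteq> bool_cube \<and> card (P \<union> N) = k)"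

end

theory Submission
  imports Defs
begin

definition DD :: "real^'n \<Rightarrow> real^'n \<Rightarrow> real" where
  "DD x y = (\<Sum>i\<in>UNIV. (x$i - y$i)^2)"

lemma dist_DD: "dist x y = sqrt (DD x y)"
  by (simp add: dist_vec_def L2_set_def DD_def dist_real_def)

lemma dist_less_DD: "dist a b < dist a c \<longleftrightarrow> DD a b < DD a c"
  by (simp add: dist_DD)

lemma cube_weight:
  assumes "a \<in> bool_cube"
  shows "weight a = real (card {i. a$i = 1})"
proof -
  have "weight a = (\<Sum>i\<in>UNIV. if a$i = 1 then 1 else 0)"
    unfolding weight_def using assms unfolding bool_cube_def
    by (intro sum.cong) auto
  also have "\<dots> = real (card {i. a$i = 1})"
    by (simp add: sum.If_cases)
  finally show ?thesis .
qed

lemma DD_diag: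
  fixes a :: "real^'n"
  assumes "a \<in> bool_cube"
  shows "DD a (\<chi> i. t) = weight a - 2 * weight a * t + real CARD('n) * t^2"
proof -
  have "DD a (\<chi> i. t) = (\<Sum>i\<in>UNIV. a$i - 2 * t * a$i + t^2)"
    unfolding DD_def
  proof (intro sum.cong refl)
    fix i
    have "a$i = 0 \<or> a$i = 1" using assms unfolding bool_cube_def by auto
    then show "(a$i - (\<chi> i. t)$i)^2 = a$i - 2 * t * a$i + t^2"
      by (auto simp: power2_eq_square algebra_simps)
  qed
  also have "\<dots> = weight a - 2 * weight a * t + real CARD('n) * t^2"
    by (simp add: sum.distrib sum_subtractf weight_def sum_distrib_left[symmetric])
  finally show ?thesis .
qed

lemma partA:
  fixes f :: "real^'n \<Rightarrow> bool"
  assumes sym: "symmetric_bf f"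
  shows "NN f \<le> CARD('n) + 1"
proof -
  define n where "n = CARD('n)"
  have n0: "n > 0" unfolding n_def by simp
  define p :: "nat \<Rightarrow> real^'n" where "p k = (\<chi> i. real k / real n)" for k
  have pinj: "p k = p j \<Longrightarrow> k = j" for k j
  proof -
    assume "p k = p j"
    then have "p k $ undefined = p j $ undefined" by simp
    then show "k = j" using n0 by (simp add: p_def)
  qed
  define P where "P = p ` {k. k \<le> n \<and> (\<exists>a\<in>bool_cube. weight a = real k \<and> f a)}"
  define N where "N = p ` {k. k \<le> n \<and> (\<exists>a\<in>bool_cube. weight a = real k \<and> \<not> f a)}"
  have sub: "P \<union> N \<subseteq> p ` {..n}" unfolding P_def N_def by auto
  have fin: "finite (P \<union> N)" using sub finite_subset by blast
  have card: "card (P \<union> N) \<le> n + 1"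
  proof -
    have "card (P \<union> N) \<le> card (p ` {..n})" using sub by (intro card_mono) auto
    also have "\<dots> \<le> card {..n}" by (rule card_image_le) auto
    finally show ?thesis by simp
  qed
  have key: "DD a (p w) < DD a (p j)" if a: "a \<in> bool_cube" "weight a = real w" "j \<noteq> w"
    for a w j
  proof -
    have "DD a (p w) = weight a - 2 * weight a * (real w / real n) + real n * (real w / real n)^2"
      unfolding p_def n_def by (rule DD_diag[OF a(1)])
    also have "\<dots> = real w - (real w)^2 / real n" using n0 a(2)
      by (simp add: field_simps power2_eq_square)
    finally have 1: "DD a (p w) = real w - (real w)^2 / real n" .
    have "DD a (p j) = weight a - 2 * weight a * (real j / real n) + real n * (real j / real n)^2"
      unfolding p_def n_def by (rule DD_diag[OF a(1)])
    also have "\<dots> = real w - (real w)^2 / real n + (real j - real w)^2 / real n" using n0 a(2)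
      by (simp add: field_simps power2_eq_square)
    finally have 2: "DD a (p j) = real w - (real w)^2 / real n + (real j - real w)^2 / real n" .
    have "(real j - real w)^2 > 0" using a(3) by simp
    then show ?thesis using 1 2 n0 by simp
  qed
  have rep: "nn_rep f P N"
    unfolding nn_rep_def
  proof (intro conjI ballI impI)
    show "finite P" "finite N" using fin by auto
    show "P \<inter> N = {}"
    proof (rule ccontr)
      assume "P \<inter> N \<noteq> {}"
      then obtain x where "x \<in> P" "x \<in> N" by blast
      then obtain k j a b where "x = p k" "x = p j" "a \<in> bool_cube" "weight a = real k" "f a"
        "b \<in> bool_cube" "weight b = real j" "\<not> f b"
        unfolding P_def N_def by blast
      then have "k = j" using pinj by metis
      then show False using sym \<open>a \<in> bool_cube\<close> \<open>b \<in> bool_cube\<close> \<open>weight a = real k\<close>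
        \<open>weight b = real j\<close> \<open>f a\<close> \<open>\<not> f b\<close> unfolding symmetric_bf_def by metis
    qed
  next
    fix a :: "real^'n" assume a: "a \<in> bool_cube"
    define w where "w = card {i. a$i = 1}"
    have wa: "weight a = real w" using cube_weight[OF a] w_def by simp
    have wn: "w \<le> n" unfolding w_def n_def by (rule card_mono) auto
    {
      assume fa: "f a"
      show "\<exists>b\<in>P. \<forall>c\<in>N. dist a b < dist a c"
      proof (intro bexI ballI)
        show "p w \<in> P" unfolding P_def using wn a wa fa by blast
        fix c assume "c \<in> N"
        then obtain j b where c: "c = p j" "b \<in> bool_cube" "weight b = real j" "\<not> f b"
          unfolding N_def by blast
        have "j \<noteq> w" using sym a c wa fa unfolding symmetric_bf_def by metis
        then show "dist a (p w) < dist a c" unfolding dist_less_DD c(1)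
          using key[OF a wa] by blast
      qed
    }
    {
      assume fa: "\<not> f a"
      show "\<exists>b\<in>N. \<forall>c\<in>P. dist a b < dist a c"
      proof (intro bexI ballI)
        show "p w \<in> N" unfolding N_def using wn a wa fa by blast
        fix c assume "c \<in> P"
        then obtain j b where c: "c = p j" "b \<in> bool_cube" "weight b = real j" "f b"
          unfolding P_def by blast
        have "j \<noteq> w" using sym a c wa fa unfolding symmetric_bf_def by metis
        then show "dist a (p w) < dist a c" unfolding dist_less_DD c(1)
          using key[OF a wa] by blast
      qed
    }
  qed
  have "NN f \<le> card (P \<union> N)" unfolding NN_def
    by (rule Least_le) (use rep in blast)
  then show ?thesis using card n_def by simp
qed


definition flip :: "real^'n \<Rightarrow> 'n \<Rightarrow> real^'n" where
  "flip a i = (\<chi> j. if j = i then 1 - a$j else a$j)"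

lemma flip_cube: "a \<in> bool_cube \<Longrightarrow> flip a i \<in> bool_cube"
  unfolding bool_cube_def flip_def by auto

lemma flip_DD_diff:
  "DD (flip a i) c - DD a c = (flip a i $ i - c$i)^2 - (a$i - c$i)^2"
proof -
  have 1: "DD (flip a i) c = (flip a i $ i - c$i)^2 + (\<Sum>j\<in>UNIV-{i}. (flip a i $ j - c$j)^2)"
    unfolding DD_def by (rule sum.remove) auto
  have 2: "DD a c = (a $ i - c$i)^2 + (\<Sum>j\<in>UNIV-{i}. (a $ j - c$j)^2)"
    unfolding DD_def by (rule sum.remove) auto
  have 3: "(\<Sum>j\<in>UNIV-{i}. (flip a i $ j - c$j)^2) = (\<Sum>j\<in>UNIV-{i}. (a $ j - c$j)^2)"
    by (rule sum.cong) (auto simp: flip_def)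
  show ?thesis using 1 2 3 by simp
qed

lemma flip_DD_ge:
  assumes "a \<in> bool_cube" "c \<in> bool_cube"
  shows "DD (flip a i) c \<ge> DD a c - 1"
proof -
  have "DD (flip a i) c - DD a c = (flip a i $ i - c$i)^2 - (a$i - c$i)^2"
    by (rule flip_DD_diff)
  moreover have "(flip a i $ i - c$i)^2 - (a$i - c$i)^2 \<ge> -1"
  proof -
    have "a$i = 0 \<or> a$i = 1" "c$i = 0 \<or> c$i = 1" using assms unfolding bool_cube_def by auto
    then show ?thesis using assms by (auto simp: flip_def)
  qed
  ultimately show ?thesis by linarith
qed

lemma flip_DD_eq:
  assumes "a \<in> bool_cube" "c \<in> bool_cube" "c$i \<noteq> a$i"
  shows "DD (flip a i) c = DD a c - 1"
proof -
  have "DD (flip a i) c - DD a c = (flip a i $ i - c$i)^2 - (a$i - c$i)^2"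
    by (rule flip_DD_diff)
  moreover have "(flip a i $ i - c$i)^2 - (a$i - c$i)^2 = -1"
  proof -
    have "a$i = 0 \<or> a$i = 1" "c$i = 0 \<or> c$i = 1" using assms unfolding bool_cube_def by auto
    then show ?thesis using assms by (auto simp: flip_def)
  qed
  ultimately show ?thesis by linarith
qed

lemma parity_flip:
  assumes "a \<in> bool_cube"
  shows "parity (flip a i) \<longleftrightarrow> \<not> parity a"
proof (cases "a$i = 1")
  case True
  have "{j. flip a i $ j = 1} = {j. a$j = 1} - {i}"
    using True by (auto simp: flip_def)
  moreover have "card ({j. a$j = 1} - {i}) = card {j. a$j = 1} - 1"
    using True by (simp add: card_Diff_singleton)
  moreover have "card {j. a$j = 1} \<ge> 1"
    using True by (metis (mono_tags) One_nat_def Suc_leI card_gt_0_iff empty_iff finite mem_Collect_eq)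
  ultimately show ?thesis unfolding parity_def by auto
next
  case False
  then have a0: "a$i = 0" using assms unfolding bool_cube_def by auto
  have "{j. flip a i $ j = 1} = insert i {j. a$j = 1}"
    using a0 by (auto simp: flip_def)
  moreover have "card (insert i {j. a$j = 1}) = Suc (card {j. a$j = 1})"
    using False by (simp add: card_insert_disjoint)
  ultimately show ?thesis unfolding parity_def by auto
qed

lemma nn_rep_neg: "nn_rep f P N \<Longrightarrow> nn_rep (\<lambda>x. \<not> f x) N P"
  unfolding nn_rep_def by auto

lemma lower_aux:
  fixes f :: "real^'n \<Rightarrow> bool"
  assumes rep: "nn_rep f P N" and sub: "P \<union> N \<subseteq> bool_cube"
    and fl: "\<And>a i. a \<in> bool_cube \<Longrightarrow> f (flip a i) \<longleftrightarrow> \<not> f a"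
    and a: "a \<in> bool_cube" and fa: "f a"
  shows "a \<in> P \<union> N"
proof (rule ccontr)
  assume na: "a \<notin> P \<union> N"
  let ?Q = "P \<union> N"
  have fin: "finite ?Q" using rep unfolding nn_rep_def by auto
  obtain b0 where b0: "b0 \<in> P" "\<forall>c\<in>N. DD a b0 < DD a c"
    using rep a fa unfolding nn_rep_def dist_less_DD by blast
  have ne: "DD a ` ?Q \<noteq> {}" using b0 by auto
  obtain b where b: "b \<in> ?Q" "DD a b = Min (DD a ` ?Q)"
    using Min_in[OF finite_imageI[OF fin] ne] by (metis (no_types, lifting) imageE)
  have bmin: "\<forall>c\<in>?Q. DD a b \<le> DD a c" using b fin by auto
  have bP: "b \<in> P"
  proof (rule ccontr)
    assume "b \<notin> P"
    then have "b \<in> N" using b by auto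
    then have "DD a b0 < DD a b" using b0 by auto
    moreover have "DD a b \<le> DD a b0" using bmin b0 by auto
    ultimately show False by simp
  qed
  have "b \<noteq> a" using b na by auto
  then obtain i where i: "b$i \<noteq> a$i" by (metis vec_eq_iff)
  define a' where "a' = flip a i"
  have bc: "b \<in> bool_cube" using b sub by auto
  have a'c: "a' \<in> bool_cube" using a flip_cube a'_def by blast
  have "\<not> f a'" using fl[OF a] fa a'_def by simp
  then obtain c where c: "c \<in> N" "\<forall>d\<in>P. DD a' c < DD a' d"
    using rep a'c unfolding nn_rep_def dist_less_DD by blast
  have "DD a' c < DD a' b" using c bP by auto
  moreover have "DD a' b = DD a b - 1" unfolding a'_def by (rule flip_DD_eq[OF a bc i])
  moreover have "DD a' c \<ge> DD a c - 1" unfolding a'_def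
    by (rule flip_DD_ge[OF a]) (use c sub in auto)
  moreover have "DD a b \<le> DD a c" using bmin c by auto
  ultimately show False by linarith
qed

lemma card_cube: "card (bool_cube :: (real^'n) set) = 2 ^ CARD('n)"
proof -
  define g :: "'n set \<Rightarrow> real^'n" where "g S = (\<chi> i. if i \<in> S then 1 else 0)" for S
  have inj: "inj_on g (Pow UNIV)"
  proof (rule inj_onI)
    fix S T assume eq: "g S = g T"
    show "S = T"
    proof (rule set_eqI)
      fix i
      have "g S $ i = g T $ i" using eq by simp
      then show "i \<in> S \<longleftrightarrow> i \<in> T" by (simp add: g_def split: if_splits)
    qed
  qed
  have img: "bool_cube = g ` Pow UNIV"
  proof
    show "g ` Pow UNIV \<subseteq> bool_cube" unfolding g_def bool_cube_def by auto
    show "bool_cube \<subseteq> g ` Pow UNIV"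
    proof
      fix x :: "real^'n" assume x: "x \<in> bool_cube"
      have "x = g {i. x$i = 1}" unfolding g_def vec_eq_iff
        using x unfolding bool_cube_def by auto
      then show "x \<in> g ` Pow UNIV" by blast
    qed
  qed
  have "card (g ` Pow UNIV) = card (Pow (UNIV :: 'n set))" by (rule card_image[OF inj])
  also have "\<dots> = 2 ^ CARD('n)" by (simp add: card_Pow)
  finally show ?thesis unfolding img .
qed

lemma partB: "BNN (parity :: real^'n \<Rightarrow> bool) = 2 ^ CARD('n)"
  unfolding BNN_def
proof (rule Least_equality)
  define P where "P = {x \<in> (bool_cube :: (real^'n) set). parity x}"
  define N where "N = {x \<in> (bool_cube :: (real^'n) set). \<not> parity x}"
  have U: "P \<union> N = bool_cube" unfolding P_def N_def by auto
  have fin: "finite (bool_cube :: (real^'n) set)"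
    using card_cube[where 'n='n] by (metis card.infinite power_not_zero zero_neq_numeral)
  have rep: "nn_rep parity P N"
    unfolding nn_rep_def
  proof (intro conjI ballI impI)
    show "finite P" "finite N" using fin U by (metis finite_Un)+
    show "P \<inter> N = {}" unfolding P_def N_def by auto
  next
    fix a :: "real^'n" assume a: "a \<in> bool_cube"
    { assume "parity a"
      then show "\<exists>b\<in>P. \<forall>c\<in>N. dist a b < dist a c"
        using a unfolding P_def N_def by (intro bexI[of _ a]) auto }
    { assume "\<not> parity a"
      then show "\<exists>b\<in>N. \<forall>c\<in>P. dist a b < dist a c"
        using a unfolding P_def N_def by (intro bexI[of _ a]) auto }
  qed
  show "\<exists>P N. nn_rep (parity :: real^'n \<Rightarrow> bool) P N \<and> P \<union> N \<subseteq> bool_cube \<and> card (P \<union> N) = 2 ^ CARD('n)"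
    using rep U card_cube[where 'n='n] by (metis order_refl)
next
  fix k
  assume "\<exists>P N. nn_rep (parity :: real^'n \<Rightarrow> bool) P N \<and> P \<union> N \<subseteq> bool_cube \<and> card (P \<union> N) = k"
  then obtain P N where rep: "nn_rep (parity :: real^'n \<Rightarrow> bool) P N" and sub: "P \<union> N \<subseteq> bool_cube"
    and k: "card (P \<union> N) = k" by blast
  have fin: "finite (P \<union> N)" using rep unfolding nn_rep_def by auto
  have "bool_cube \<subseteq> P \<union> N"
  proof
    fix a :: "real^'n" assume a: "a \<in> bool_cube"
    show "a \<in> P \<union> N"
    proof (cases "parity a")
      case True
      show ?thesis by (rule lower_aux[OF rep sub _ a True]) (rule parity_flip)
    next
      case False
      have "a \<in> N \<union> P"
        by (rule lower_aux[OF nn_rep_neg[OF rep], of a]) (use sub parity_flip a False in auto)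
      then show ?thesis by auto
    qed
  qed
  then have "card (bool_cube :: (real^'n) set) \<le> k" using card_mono[OF fin] k by auto
  then show "2 ^ CARD('n) \<le> k" using card_cube[where 'n='n] by simp
qed

theorem proposition1:
  shows "(\<forall>f :: real^'n \<Rightarrow> bool. symmetric_bf f \<longrightarrow> NN f \<le> CARD('n) + 1)
         \<and> BNN (parity :: real^'n \<Rightarrow> bool) = 2 ^ CARD('n)"
  using partA partB by blast

end
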